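(* Let $E$ be a complete separable metric space, and let $\{X_n, n\ge1\}$ and $\{Y_n, n\ge0\}$ be $E$-valued random elements, where the $Y_n$ ($n\ge 0$) are defined on a common probability space. Assume: (1) $Y_n\to Y_0$ in probability as $n\to\infty$; (2) for each $n\ge1$ the law $P_{X_n}$ of $X_n$ is absolutely continuous with respect to the law $P_{Y_n}$ of $Y_n$, with Radon–Nikodym density $\rho_n=\frac{dP_{X_n}}{dP_{Y_n}}:E\to[0,\infty)$; (3) $\rho_n(Y_n)\to p$ in probability for some random variable $p$; (4) $\mathbb{E}p=1$. Then $P_{X_n}$ converges weakly as $n\to\infty$ to the probability measure $\mathbb{E}(p\mid Y_0=y)\,P_{Y_0}(dy)$ on $E$. *)

theory Defs
  imports "HOL-Probability.Probability"
begin

definition conv_in_prob :: "'b measure \<Rightarrow> (nat \<Rightarrow> 'b \<Rightarrow> 'a::metric_space) \<Rightarrow> ('b \<Rightarrow> 'a) \<Rightarrow> bool" where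
  "conv_in_prob M Z Z0 \<longleftrightarrow>
     (\<forall>e>0. (\<lambda>n. measure M {\<omega> \<in> space M. dist (Z n \<omega>) (Z0 \<omega>) > e}) \<longlonglongrightarrow> 0)"

definition weak_conv_measures :: "(nat \<Rightarrow> 'a::metric_space measure) \<Rightarrow> 'a measure \<Rightarrow> bool" where
  "weak_conv_measures \<mu> \<nu> \<longleftrightarrow>
     (\<forall>f :: 'a \<Rightarrow> real. continuous_on UNIV f \<and> bounded (range f) \<longrightarrow>
        (\<lambda>n. integral\<^sup>L (\<mu> n) f) \<longlonglongrightarrow> integral\<^sup>L \<nu> f)"

end

theory Submission imports Defs begin

lemma tendsto_subsubseq:
  fixes a :: "nat \<Rightarrow> real"
  assumes H: "\<And>r::nat\<Rightarrow>nat. strict_mono r \<Longrightarrow> \<exists>s::nat\<Rightarrow>nat. strict_mono s \<and> (\<lambda>n. a (r (s n))) \<longlonglongrightarrow> L"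
  shows "a \<longlonglongrightarrow> L"
proof (rule ccontr)
  assume "\<not> a \<longlonglongrightarrow> L"
  then obtain e where e: "e > 0" and inf: "\<And>N. \<exists>n\<ge>N. \<not> dist (a n) L < e"
    unfolding LIMSEQ_def by (auto simp: not_less)
  define S where "S = {n. \<not> dist (a n) L < e}"
  have "infinite S" unfolding S_def infinite_nat_iff_unbounded_le using inf by auto
  define r where "r = wellorder_class.enumerate S"
  have sm: "strict_mono r" and inS: "\<And>n. r n \<in> S"
    unfolding r_def using strict_mono_enumerate[OF \<open>infinite S\<close>] enumerate_in_set[OF \<open>infinite S\<close>] by auto
  obtain s where "strict_mono s" and lim: "(\<lambda>n. a (r (s n))) \<longlonglongrightarrow> L"
    using H[OF sm] by blast
  then obtain n where "dist (a (r (s n))) L < e"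
    using e unfolding LIMSEQ_def by blast
  with inS[of "s n"] show False by (auto simp: S_def)
qed

lemma conv_in_prob_subseq:
  assumes "conv_in_prob M Z Z0" "strict_mono q"
  shows "conv_in_prob M (\<lambda>n. Z (q n)) Z0"
  using assms LIMSEQ_subseq_LIMSEQ unfolding conv_in_prob_def o_def by fastforce

lemma conv_in_prob_AE_subseq:
  fixes Z :: "nat \<Rightarrow> 'b \<Rightarrow> 'a::{metric_space, second_countable_topology}"
  assumes "prob_space M" and [measurable]: "\<And>n. Z n \<in> borel_measurable M" "Z0 \<in> borel_measurable M"
    and conv: "conv_in_prob M Z Z0"
  shows "\<exists>r. strict_mono r \<and> (AE \<omega> in M. (\<lambda>n. Z (r n) \<omega>) \<longlonglongrightarrow> Z0 \<omega>)"
proof -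
  interpret prob_space M by fact
  have "\<forall>k. \<exists>N. \<forall>m\<ge>N. measure M {\<omega>\<in>space M. dist (Z m \<omega>) (Z0 \<omega>) > (1/2)^k} < (1/2::real)^k"
  proof
    fix k :: nat
    have "(\<lambda>n. measure M {\<omega> \<in> space M. dist (Z n \<omega>) (Z0 \<omega>) > (1/2)^k}) \<longlonglongrightarrow> 0"
      using conv unfolding conv_in_prob_def by simp
    from order_tendstoD(2)[OF this, of "(1/2)^k"]
    show "\<exists>N. \<forall>m\<ge>N. measure M {\<omega>\<in>space M. dist (Z m \<omega>) (Z0 \<omega>) > (1/2)^k} < (1/2::real)^k"
      by (simp add: eventually_sequentially)
  qed
  then obtain N where N: "\<And>k m. m \<ge> N k \<Longrightarrow> measure M {\<omega>\<in>space M. dist (Z m \<omega>) (Z0 \<omega>) > (1/2)^k} < (1/2::real)^k"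
    by metis
  define r where "r = rec_nat (N 0) (\<lambda>k rk. max (Suc rk) (N (Suc k)))"
  have r_ge: "r k \<ge> N k" for k by (cases k) (simp_all add: r_def)
  have sm: "strict_mono r" by (rule strict_monoI_Suc) (simp add: r_def)
  define A where "A k = {\<omega>\<in>space M. dist (Z (r k) \<omega>) (Z0 \<omega>) > (1/2::real)^k}" for k
  have [measurable]: "A k \<in> sets M" for k unfolding A_def by measurable
  have "summable (\<lambda>k. measure M (A k))"
  proof (rule summable_comparison_test')
    show "summable (\<lambda>k. (1/2::real)^k)" by (simp add: summable_geometric)
    fix k :: nat assume "k \<ge> 0"
    show "norm (measure M (A k)) \<le> (1/2)^k"
      using N[OF r_ge[of k]] unfolding A_def by simp
  qed
  then have "AE x in M. eventually (\<lambda>n. x \<in> space M - A n) sequentially"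
    by (intro borel_cantelli_AE1) (auto simp: less_top[symmetric])
  then have "AE \<omega> in M. (\<lambda>n. Z (r n) \<omega>) \<longlonglongrightarrow> Z0 \<omega>"
  proof (eventually_elim)
    case (elim x)
    have "(\<lambda>n. dist (Z (r n) x) (Z0 x)) \<longlonglongrightarrow> 0"
    proof (rule tendsto_sandwich[of "\<lambda>_. 0" _ _ "\<lambda>n. (1/2::real)^n"])
      show "\<forall>\<^sub>F n in sequentially. dist (Z (r n) x) (Z0 x) \<le> (1/2)^n"
        using elim by eventually_elim (auto simp: A_def not_less)
      show "(\<lambda>n. (1/2::real)^n) \<longlonglongrightarrow> 0" by (rule LIMSEQ_power_zero) auto
    qed auto
    then show ?case using tendsto_dist_iff by blast
  qed
  with sm show ?thesis by blast
qed

lemma absmul_le1: "\<bar>c::real\<bar> \<le> B \<Longrightarrow> \<bar>a\<bar> * \<bar>c\<bar> \<le> B * \<bar>a\<bar>"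
  by (metis abs_ge_zero mult.commute mult_left_mono)
lemma absmul_le2: "\<bar>c::real\<bar> \<le> B \<Longrightarrow> \<bar>c\<bar> * \<bar>a\<bar> \<le> B * \<bar>a\<bar>"
  by (simp add: mult_right_mono)

lemma core_limit:
  fixes W :: "nat \<Rightarrow> 'b \<Rightarrow> real" and V :: "nat \<Rightarrow> 'b \<Rightarrow> 'a::polish_space"
    and f :: "'a \<Rightarrow> real"
  assumes "prob_space M"
    and W_meas[measurable]: "\<And>n. W n \<in> borel_measurable M"
    and W_nn: "\<And>n \<omega>. W n \<omega> \<ge> 0"
    and W_int: "\<And>n. integrable M (W n)"
    and W_one: "\<And>n. integral\<^sup>L M (W n) = 1"
    and V_meas[measurable]: "\<And>n. V n \<in> borel_measurable M"
    and V0_meas[measurable]: "V0 \<in> borel_measurable M"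
    and p_int: "integrable M p" and p_one: "integral\<^sup>L M p = 1"
    and f_cont: "continuous_on UNIV f" and fB: "\<And>x. \<bar>f x\<bar> \<le> B"
    and V_lim: "AE \<omega> in M. (\<lambda>n. V n \<omega>) \<longlonglongrightarrow> V0 \<omega>"
    and W_lim: "AE \<omega> in M. (\<lambda>n. W n \<omega>) \<longlonglongrightarrow> p \<omega>"
  shows "(\<lambda>n. \<integral>\<omega>. W n \<omega> * f (V n \<omega>) \<partial>M) \<longlonglongrightarrow> (\<integral>\<omega>. p \<omega> * f (V0 \<omega>) \<partial>M)"
proof -
  interpret prob_space M by fact
  have f_meas[measurable]: "f \<in> borel_measurable borel"
    using f_cont by (rule borel_measurable_continuous_onI)
  have p_meas[measurable]: "p \<in> borel_measurable M" using p_int by simp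
  have B0: "B \<ge> 0" using fB[of undefined] by simp
  \<comment> \<open>Scheffe part\<close>
  have min_lim: "(\<lambda>n. \<integral>\<omega>. min (W n \<omega>) (p \<omega>) \<partial>M) \<longlonglongrightarrow> (\<integral>\<omega>. p \<omega> \<partial>M)"
  proof (rule integral_dominated_convergence[where w="\<lambda>\<omega>. \<bar>p \<omega>\<bar>"])
    show "integrable M (\<lambda>\<omega>. \<bar>p \<omega>\<bar>)" using p_int by simp
    show "AE x in M. (\<lambda>i. min (W i x) (p x)) \<longlonglongrightarrow> p x"
      using W_lim
    proof eventually_elim
      case (elim x)
      then show ?case using tendsto_min[OF elim tendsto_const[of "p x"]] by simp
    qed
    show "AE x in M. norm (min (W i x) (p x)) \<le> \<bar>p x\<bar>" for i
      using W_nn[of i] by (auto simp: min_def)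
  qed auto
  have min_int: "integrable M (\<lambda>\<omega>. min (W n \<omega>) (p \<omega>))" for n
    using W_int p_int by (intro integrable_min)
  have absdiff: "(\<integral>\<omega>. \<bar>W n \<omega> - p \<omega>\<bar> \<partial>M) = 2 - 2 * (\<integral>\<omega>. min (W n \<omega>) (p \<omega>) \<partial>M)" for n
  proof -
    have "(\<integral>\<omega>. \<bar>W n \<omega> - p \<omega>\<bar> \<partial>M) = (\<integral>\<omega>. W n \<omega> + p \<omega> - 2 * min (W n \<omega>) (p \<omega>) \<partial>M)"
      by (rule Bochner_Integration.integral_cong) (auto simp: min_def)
    also have "\<dots> = (\<integral>\<omega>. W n \<omega> \<partial>M) + (\<integral>\<omega>. p \<omega> \<partial>M) - 2 * (\<integral>\<omega>. min (W n \<omega>) (p \<omega>) \<partial>M)"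
      using W_int[of n] p_int min_int[of n] by simp
    finally show ?thesis using W_one p_one by simp
  qed
  have L1: "(\<lambda>n. \<integral>\<omega>. \<bar>W n \<omega> - p \<omega>\<bar> \<partial>M) \<longlonglongrightarrow> 0"
    unfolding absdiff using tendsto_diff[OF tendsto_const[of 2] tendsto_mult[OF tendsto_const[of 2] min_lim]] p_one
    by simp
  have T1_int: "integrable M (\<lambda>\<omega>. (W n \<omega> - p \<omega>) * f (V n \<omega>))" for n
  proof (rule Bochner_Integration.integrable_bound[where f="\<lambda>\<omega>. B * (W n \<omega> - p \<omega>)"])
    show "integrable M (\<lambda>\<omega>. B * (W n \<omega> - p \<omega>))" using W_int p_int by simp
    show "AE x in M. norm ((W n x - p x) * f (V n x)) \<le> norm (B * (W n x - p x))"
      using fB B0 by (intro AE_I2) (simp add: abs_mult absmul_le1 absmul_le2)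
  qed simp
  have T1: "(\<lambda>n. \<integral>\<omega>. (W n \<omega> - p \<omega>) * f (V n \<omega>) \<partial>M) \<longlonglongrightarrow> 0"
  proof (rule Lim_null_comparison[where g="\<lambda>n. B * (\<integral>\<omega>. \<bar>W n \<omega> - p \<omega>\<bar> \<partial>M)"])
    show "\<forall>\<^sub>F n in sequentially. norm (\<integral>\<omega>. (W n \<omega> - p \<omega>) * f (V n \<omega>) \<partial>M) \<le> B * (\<integral>\<omega>. \<bar>W n \<omega> - p \<omega>\<bar> \<partial>M)"
    proof (intro always_eventually allI)
      fix n
      have "norm (\<integral>\<omega>. (W n \<omega> - p \<omega>) * f (V n \<omega>) \<partial>M) \<le> (\<integral>\<omega>. norm ((W n \<omega> - p \<omega>) * f (V n \<omega>)) \<partial>M)"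
        by (rule integral_norm_bound)
      also have "\<dots> \<le> (\<integral>\<omega>. B * \<bar>W n \<omega> - p \<omega>\<bar> \<partial>M)"
      proof (rule integral_mono)
        show "integrable M (\<lambda>\<omega>. norm ((W n \<omega> - p \<omega>) * f (V n \<omega>)))"
          using T1_int[of n] by (rule integrable_norm)
        show "integrable M (\<lambda>\<omega>. B * \<bar>W n \<omega> - p \<omega>\<bar>)" using W_int p_int by simp
        show "norm ((W n x - p x) * f (V n x)) \<le> B * \<bar>W n x - p x\<bar>" for x
          using fB B0 by (simp add: abs_mult mult.commute mult_right_mono)
      qed
      also have "\<dots> = B * (\<integral>\<omega>. \<bar>W n \<omega> - p \<omega>\<bar> \<partial>M)" by simp
      finally show "norm (\<integral>\<omega>. (W n \<omega> - p \<omega>) * f (V n \<omega>) \<partial>M) \<le> B * (\<integral>\<omega>. \<bar>W n \<omega> - p \<omega>\<bar> \<partial>M)" .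
    qed
    show "(\<lambda>n. B * (\<integral>\<omega>. \<bar>W n \<omega> - p \<omega>\<bar> \<partial>M)) \<longlonglongrightarrow> 0"
      using tendsto_mult[OF tendsto_const[of B] L1] by simp
  qed
  have T2: "(\<lambda>n. \<integral>\<omega>. p \<omega> * f (V n \<omega>) \<partial>M) \<longlonglongrightarrow> (\<integral>\<omega>. p \<omega> * f (V0 \<omega>) \<partial>M)"
  proof (rule integral_dominated_convergence[where w="\<lambda>\<omega>. B * \<bar>p \<omega>\<bar>"])
    show "integrable M (\<lambda>\<omega>. B * \<bar>p \<omega>\<bar>)" using p_int by simp
    show "AE x in M. (\<lambda>i. p x * f (V i x)) \<longlonglongrightarrow> p x * f (V0 x)"
      using V_lim
    proof eventually_elim
      case (elim x)
      have "(\<lambda>i. f (V i x)) \<longlonglongrightarrow> f (V0 x)"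
        using continuous_on_tendsto_compose[OF f_cont elim] by simp
      then show ?case by (intro tendsto_mult tendsto_const)
    qed
    show "AE x in M. norm (p x * f (V i x)) \<le> B * \<bar>p x\<bar>" for i
      using fB by (intro AE_I2) (simp add: abs_mult absmul_le1 absmul_le2)
  qed auto
  have T2_int: "integrable M (\<lambda>\<omega>. p \<omega> * f (V n \<omega>))" for n
  proof (rule Bochner_Integration.integrable_bound[where f="\<lambda>\<omega>. B * p \<omega>"])
    show "integrable M (\<lambda>\<omega>. B * p \<omega>)" using p_int by simp
    show "AE x in M. norm (p x * f (V n x)) \<le> norm (B * p x)"
      using fB B0 by (intro AE_I2) (simp add: abs_mult absmul_le1 absmul_le2)
  qed simp
  have eq: "(\<integral>\<omega>. W n \<omega> * f (V n \<omega>) \<partial>M) = (\<integral>\<omega>. (W n \<omega> - p \<omega>) * f (V n \<omega>) \<partial>M) + (\<integral>\<omega>. p \<omega> * f (V n \<omega>) \<partial>M)" for n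
  proof -
    have "(\<integral>\<omega>. W n \<omega> * f (V n \<omega>) \<partial>M) = (\<integral>\<omega>. (W n \<omega> - p \<omega>) * f (V n \<omega>) + p \<omega> * f (V n \<omega>) \<partial>M)"
      by (simp add: algebra_simps)
    also have "\<dots> = (\<integral>\<omega>. (W n \<omega> - p \<omega>) * f (V n \<omega>) \<partial>M) + (\<integral>\<omega>. p \<omega> * f (V n \<omega>) \<partial>M)"
      using T1_int[of n] T2_int[of n] by (rule Bochner_Integration.integral_add)
    finally show ?thesis .
  qed
  show ?thesis unfolding eq using tendsto_add[OF T1 T2] by simp
qed

theorem lemma1:
  fixes M :: "'b measure" and Y :: "nat \<Rightarrow> 'b \<Rightarrow> 'a::polish_space"
    and N :: "nat \<Rightarrow> 'c measure" and X :: "nat \<Rightarrow> 'c \<Rightarrow> 'a"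
    and \<rho> :: "nat \<Rightarrow> 'a \<Rightarrow> real" and p :: "'b \<Rightarrow> real"
  assumes M: "prob_space M"
    and Y_meas: "\<And>n. Y n \<in> M \<rightarrow>\<^sub>M borel"
    and N: "\<And>n. n \<ge> 1 \<Longrightarrow> prob_space (N n)"
    and X_meas: "\<And>n. n \<ge> 1 \<Longrightarrow> X n \<in> N n \<rightarrow>\<^sub>M borel"
    and Y_conv: "conv_in_prob M Y (Y 0)"
    and abs_cont: "\<And>n. n \<ge> 1 \<Longrightarrow> absolutely_continuous (distr M borel (Y n)) (distr (N n) borel (X n))"
    and \<rho>_meas: "\<And>n. n \<ge> 1 \<Longrightarrow> \<rho> n \<in> borel_measurable borel"
    and \<rho>_nonneg: "\<And>n x. n \<ge> 1 \<Longrightarrow> \<rho> n x \<ge> 0"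
    and \<rho>_density: "\<And>n. n \<ge> 1 \<Longrightarrow>
          distr (N n) borel (X n) = density (distr M borel (Y n)) (\<lambda>x. ennreal (\<rho> n x))"
    and p_meas: "p \<in> borel_measurable M"
    and p_conv: "conv_in_prob M (\<lambda>n \<omega>. \<rho> n (Y n \<omega>)) p"
    and p_int: "integrable M p"
    and p_exp: "prob_space.expectation M p = 1"
  shows "\<forall>g \<in> borel_measurable borel.
           (AE \<omega> in M. real_cond_exp M (vimage_algebra (space M) (Y 0) borel) p \<omega> = g (Y 0 \<omega>)) \<longrightarrow>
           weak_conv_measures (\<lambda>n. distr (N n) borel (X n))
             (density (distr M borel (Y 0)) (\<lambda>y. ennreal (g y)))"
proof (intro ballI impI)
  fix g :: "'a \<Rightarrow> real"
  assume g_meas[measurable]: "g \<in> borel_measurable borel"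
    and gAE: "AE \<omega> in M. real_cond_exp M (vimage_algebra (space M) (Y 0) borel) p \<omega> = g (Y 0 \<omega>)"
  let ?F = "vimage_algebra (space M) (Y 0) borel"
  interpret prob_space M by (rule M)
  note Y_meas[measurable] p_meas[measurable]
  have sub: "subalgebra M ?F"
    unfolding subalgebra_def
  proof
    show "space ?F = space M" by simp
    have "sets ?F = {Y 0 -` A \<inter> space M | A. A \<in> sets borel}"
      by (rule sets_vimage_algebra2) simp
    then show "sets ?F \<subseteq> sets M" using measurable_sets[OF Y_meas[of 0]] by auto
  qed
  have "finite_measure_subalgebra M ?F"
    unfolding finite_measure_subalgebra_def finite_measure_subalgebra_axioms_def
    using sub M unfolding prob_space_def by simp
  then interpret sigma_finite_subalgebra M ?F
    by (rule finite_measure_subalgebra_is_sigma_finite)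
  define ZZ where "ZZ n \<omega> = \<rho> n (Y n \<omega>)" for n \<omega>
  have ZZ_meas[measurable]: "n \<ge> 1 \<Longrightarrow> ZZ n \<in> borel_measurable M" for n
    unfolding ZZ_def using \<rho>_meas[of n] by measurable
  have ZZ_nn: "n \<ge> 1 \<Longrightarrow> ZZ n \<omega> \<ge> 0" for n \<omega> unfolding ZZ_def using \<rho>_nonneg by simp
  have sm_Suc: "strict_mono Suc" by (simp add: strict_mono_def)
  have "conv_in_prob M (\<lambda>n. ZZ (Suc n)) p"
    using conv_in_prob_subseq[OF p_conv sm_Suc] unfolding ZZ_def by simp
  then obtain r0 :: "nat \<Rightarrow> nat" where "AE \<omega> in M. (\<lambda>n. ZZ (Suc (r0 n)) \<omega>) \<longlonglongrightarrow> p \<omega>"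
    using conv_in_prob_AE_subseq[OF M, of "\<lambda>n. ZZ (Suc n)" p] by auto
  then have p_nn: "AE \<omega> in M. p \<omega> \<ge> 0"
  proof eventually_elim
    case (elim x)
    show ?case by (rule LIMSEQ_le_const[OF elim]) (use ZZ_nn in auto)
  qed
  have ce_nn: "AE \<omega> in M. real_cond_exp M ?F p \<omega> \<ge> 0"
    using p_nn by (intro real_cond_exp_pos) auto
  have gY_nn: "AE \<omega> in M. g (Y 0 \<omega>) \<ge> 0" using ce_nn gAE by eventually_elim simp
  have g_nn: "AE y in distr M borel (Y 0). g y \<ge> 0"
    by (subst AE_distr_iff) (use gY_nn in auto)
  show "weak_conv_measures (\<lambda>n. distr (N n) borel (X n)) (density (distr M borel (Y 0)) (\<lambda>y. ennreal (g y)))"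
    unfolding weak_conv_measures_def
  proof (intro allI impI, elim conjE)
    fix f :: "'a \<Rightarrow> real"
    assume f_cont: "continuous_on UNIV f" and f_bdd: "bounded (range f)"
    have f_meas[measurable]: "f \<in> borel_measurable borel"
      using f_cont by (rule borel_measurable_continuous_onI)
    obtain B where fB: "\<And>x. \<bar>f x\<bar> \<le> B" using f_bdd unfolding bounded_iff by auto
    have B0: "B \<ge> 0" using fB[of undefined] by simp
    have fYp_int: "integrable M (\<lambda>\<omega>. f (Y 0 \<omega>) * p \<omega>)"
    proof (rule Bochner_Integration.integrable_bound[where f="\<lambda>\<omega>. B * p \<omega>"])
      show "integrable M (\<lambda>\<omega>. B * p \<omega>)" using p_int by simp
      show "AE x in M. norm (f (Y 0 x) * p x) \<le> norm (B * p x)"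
        using fB B0 by (intro AE_I2) (simp add: abs_mult absmul_le1 absmul_le2)
    qed simp
    have fY_F: "(\<lambda>\<omega>. f (Y 0 \<omega>)) \<in> borel_measurable ?F"
      using measurable_compose[OF measurable_vimage_algebra1[of "Y 0" "space M" borel] f_meas] by simp
    have L: "integral\<^sup>L (density (distr M borel (Y 0)) (\<lambda>y. ennreal (g y))) f = (\<integral>\<omega>. p \<omega> * f (Y 0 \<omega>) \<partial>M)"
    proof -
      have "integral\<^sup>L (density (distr M borel (Y 0)) (\<lambda>y. ennreal (g y))) f
          = (\<integral>y. g y *\<^sub>R f y \<partial>distr M borel (Y 0))"
        by (rule integral_density) (use g_nn in auto)
      also have "\<dots> = (\<integral>\<omega>. g (Y 0 \<omega>) * f (Y 0 \<omega>) \<partial>M)"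
        by (subst integral_distr) auto
      also have "\<dots> = (\<integral>\<omega>. f (Y 0 \<omega>) * real_cond_exp M ?F p \<omega> \<partial>M)"
        by (rule integral_cong_AE) (use gAE in auto)
      also have "\<dots> = (\<integral>\<omega>. f (Y 0 \<omega>) * p \<omega> \<partial>M)"
        by (rule real_cond_exp_intg(2)[OF fYp_int fY_F p_meas])
      finally show ?thesis by (simp add: mult.commute)
    qed
    have seq: "integral\<^sup>L (distr (N n) borel (X n)) f = (\<integral>\<omega>. ZZ n \<omega> * f (Y n \<omega>) \<partial>M)"
      if n: "n \<ge> 1" for n
    proof -
      note \<rho>_meas[OF n, measurable]
      have "integral\<^sup>L (distr (N n) borel (X n)) f = integral\<^sup>L (density (distr M borel (Y n)) (\<lambda>x. ennreal (\<rho> n x))) f"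
        using \<rho>_density[OF n] by simp
      also have "\<dots> = (\<integral>y. \<rho> n y *\<^sub>R f y \<partial>distr M borel (Y n))"
        by (rule integral_density) (use \<rho>_nonneg[OF n] in auto)
      also have "\<dots> = (\<integral>\<omega>. ZZ n \<omega> * f (Y n \<omega>) \<partial>M)"
        by (subst integral_distr) (auto simp: ZZ_def)
      finally show ?thesis .
    qed
    have ZZ_nn_int: "(\<integral>\<^sup>+\<omega>. ennreal (ZZ n \<omega>) \<partial>M) = 1" if n: "n \<ge> 1" for n
    proof -
      note \<rho>_meas[OF n, measurable]
      have "prob_space (distr (N n) borel (X n))"
        by (rule prob_space.prob_space_distr[OF N[OF n] X_meas[OF n]])
      then have "1 = emeasure (distr (N n) borel (X n)) UNIV"
        using prob_space.emeasure_space_1 by fastforce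
      also have "\<dots> = emeasure (density (distr M borel (Y n)) (\<lambda>x. ennreal (\<rho> n x))) UNIV"
        using \<rho>_density[OF n] by simp
      also have "\<dots> = (\<integral>\<^sup>+ y. ennreal (\<rho> n y) \<partial>distr M borel (Y n))"
        by (subst emeasure_density) auto
      also have "\<dots> = (\<integral>\<^sup>+\<omega>. ennreal (ZZ n \<omega>) \<partial>M)"
        by (subst nn_integral_distr) (auto simp: ZZ_def)
      finally show ?thesis by simp
    qed
    have ZZ_int: "integrable M (ZZ n)" if n: "n \<ge> 1" for n
      by (rule integrableI_nonneg) (use ZZ_nn_int[OF n] ZZ_nn[OF n] ZZ_meas[OF n] in auto)
    have ZZ_one: "integral\<^sup>L M (ZZ n) = 1" if n: "n \<ge> 1" for n
      by (subst integral_eq_nn_integral) (use ZZ_nn_int[OF n] ZZ_nn[OF n] ZZ_meas[OF n] in auto)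
    have p_one: "integral\<^sup>L M p = 1" using p_exp by simp
    have "(\<lambda>n. integral\<^sup>L (distr (N (Suc n)) borel (X (Suc n))) f) \<longlonglongrightarrow> (\<integral>\<omega>. p \<omega> * f (Y 0 \<omega>) \<partial>M)"
    proof (rule tendsto_subsubseq)
      fix r :: "nat \<Rightarrow> nat" assume r: "strict_mono r"
      define q where "q n = Suc (r n)" for n
      have q: "strict_mono q" using r by (simp add: strict_mono_def q_def)
      have q1: "q n \<ge> 1" for n by (simp add: q_def)
      obtain s :: "nat \<Rightarrow> nat" where s: "strict_mono s"
        and sY: "AE \<omega> in M. (\<lambda>n. Y (q (s n)) \<omega>) \<longlonglongrightarrow> Y 0 \<omega>"
        using conv_in_prob_AE_subseq[OF M, of "\<lambda>n. Y (q n)" "Y 0"] conv_in_prob_subseq[OF Y_conv q]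
        by auto
      have qs: "strict_mono (\<lambda>n. q (s n))" using q s by (simp add: strict_mono_def)
      have "conv_in_prob M (\<lambda>n. ZZ (q (s n))) p"
        using conv_in_prob_subseq[OF p_conv qs] unfolding ZZ_def by simp
      then obtain t :: "nat \<Rightarrow> nat" where t: "strict_mono t"
        and tZ: "AE \<omega> in M. (\<lambda>n. ZZ (q (s (t n))) \<omega>) \<longlonglongrightarrow> p \<omega>"
        using conv_in_prob_AE_subseq[OF M, of "\<lambda>n. ZZ (q (s n))" p] ZZ_meas q1 by auto
      have tY: "AE \<omega> in M. (\<lambda>n. Y (q (s (t n))) \<omega>) \<longlonglongrightarrow> Y 0 \<omega>"
        using sY
      proof eventually_elim
        case (elim x)
        from LIMSEQ_subseq_LIMSEQ[OF elim t] show ?case by (simp add: o_def)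
      qed
      have "(\<lambda>n. \<integral>\<omega>. ZZ (q (s (t n))) \<omega> * f (Y (q (s (t n))) \<omega>) \<partial>M) \<longlonglongrightarrow> (\<integral>\<omega>. p \<omega> * f (Y 0 \<omega>) \<partial>M)"
        by (rule core_limit[OF M _ _ _ _ _ _ p_int p_one f_cont fB tY tZ])
           (use ZZ_meas ZZ_nn ZZ_int ZZ_one q1 in auto)
      moreover have "integral\<^sup>L (distr (N (Suc (r (s (t n))))) borel (X (Suc (r (s (t n)))))) f
          = (\<integral>\<omega>. ZZ (q (s (t n))) \<omega> * f (Y (q (s (t n))) \<omega>) \<partial>M)" for n
        using seq[of "q (s (t n))"] by (simp add: q_def)
      ultimately have "(\<lambda>n. integral\<^sup>L (distr (N (Suc (r (s (t n))))) borel (X (Suc (r (s (t n)))))) f)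
           \<longlonglongrightarrow> (\<integral>\<omega>. p \<omega> * f (Y 0 \<omega>) \<partial>M)" by simp
      moreover have "strict_mono (\<lambda>n. s (t n))" using s t by (simp add: strict_mono_def)
      ultimately show "\<exists>s'::nat\<Rightarrow>nat. strict_mono s' \<and>
          (\<lambda>n. integral\<^sup>L (distr (N (Suc (r (s' n)))) borel (X (Suc (r (s' n))))) f) \<longlonglongrightarrow> (\<integral>\<omega>. p \<omega> * f (Y 0 \<omega>) \<partial>M)"
        by blast
    qed
    then have "(\<lambda>n. integral\<^sup>L (distr (N n) borel (X n)) f) \<longlonglongrightarrow> (\<integral>\<omega>. p \<omega> * f (Y 0 \<omega>) \<partial>M)"
      by (rule LIMSEQ_imp_Suc)
    then show "(\<lambda>n. integral\<^sup>L (distr (N n) borel (X n)) f) \<longlonglongrightarrow> integral\<^sup>L (density (distr M borel (Y 0)) (\<lambda>y. ennreal (g y))) f"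
      using L by simp
  qed
qed

end
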